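(* Let $M$ be a complete Riemannian manifold, $p\in M$, and let $C\in\pi_1(M,p)$ be an irreducible class with a minimal representative geodesic loop $c:[0,L(C)]\to M$ (parametrized by arclength). Then $c$ is a minimizing geodesic on $[0,L(C)/2]$ and on $[L(C)/2,L(C)]$.
   Context: For $C\in\pi_1(M,p)$, $L(C)$ is the infimum of the lengths of loops based at $p$ in the class $C$. A minimal representative geodesic loop of $C$ is a geodesic loop $c\in C$ based at $p$ (possibly not smooth at $p$) whose length equals $L(C)$; such loops exist. A non-trivial element $C\in\pi_1(M,p)$ is irreducible if every decomposition $C=C_1C_2$ with $C_1,C_2\in\pi_1(M,p)$ satisfies $L(C_1)\geq L(C)$ or $L(C_2)\geq L(C)$. *)

theory Defs
  imports "HOL-Analysis.Analysis"
begin

text \<open>Riemannian manifolds are modelled (via the Nash embedding theorem) as embedded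
  smooth submanifolds of a Euclidean space, with the induced Riemannian metric.\<close>

fun Ck_on :: "nat \<Rightarrow> ('a::euclidean_space \<Rightarrow> 'b::euclidean_space) \<Rightarrow> 'a set \<Rightarrow> bool" where
  "Ck_on 0 f U = continuous_on U f"
| "Ck_on (Suc k) f U = ((\<forall>x\<in>U. f differentiable (at x)) \<and>
      (\<forall>v. Ck_on k (\<lambda>x. frechet_derivative f (at x) v) U))"

definition smooth_on :: "('a::euclidean_space \<Rightarrow> 'b::euclidean_space) \<Rightarrow> 'a set \<Rightarrow> bool" where
  "smooth_on f U \<longleftrightarrow> (\<forall>k. Ck_on k f U)"

definition embedded_submanifold :: "'a::euclidean_space set \<Rightarrow> bool" where
  "embedded_submanifold M \<longleftrightarrow>
     (\<forall>x\<in>M. \<exists>U V (\<phi>::'a \<Rightarrow> 'a) \<psi> S. open U \<and> x \<in> U \<and> open V \<and>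
        \<phi> ` U = V \<and> \<psi> ` V = U \<and> (\<forall>y\<in>U. \<psi> (\<phi> y) = y) \<and> (\<forall>z\<in>V. \<phi> (\<psi> z) = z) \<and>
        smooth_on \<phi> U \<and> smooth_on \<psi> V \<and> subspace S \<and> \<phi> ` (U \<inter> M) = V \<inter> S)"

definition tangent_space :: "'a::euclidean_space set \<Rightarrow> 'a \<Rightarrow> 'a set" where
  "tangent_space M x = {v. \<exists>\<gamma> e. e > 0 \<and> (\<forall>t\<in>{-e<..<e}. \<gamma> t \<in> M) \<and> \<gamma> 0 = x \<and>
       (\<gamma> has_vector_derivative v) (at 0)}"

definition curve_length :: "(real \<Rightarrow> 'a::euclidean_space) \<Rightarrow> real \<Rightarrow> real \<Rightarrow> ereal" where
  "curve_length g a b = (SUP nt \<in> {(n, t). t 0 = a \<and> t n = b \<and> (\<forall>i<n. t i \<le> t (Suc i))}.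
      ereal (\<Sum>i<fst nt. dist (g (snd nt (Suc i))) (g (snd nt i))))"

definition idist :: "'a::euclidean_space set \<Rightarrow> 'a \<Rightarrow> 'a \<Rightarrow> ereal" where
  "idist M x y = (INF \<gamma> \<in> {\<gamma>. path \<gamma> \<and> path_image \<gamma> \<subseteq> M \<and> pathstart \<gamma> = x \<and> pathfinish \<gamma> = y}.
      curve_length \<gamma> 0 1)"

definition complete_manifold :: "'a::euclidean_space set \<Rightarrow> bool" where
  "complete_manifold M \<longleftrightarrow>
     (\<forall>\<sigma>. (\<forall>n. \<sigma> n \<in> M) \<and> (\<forall>e>0. \<exists>N. \<forall>m\<ge>N. \<forall>n\<ge>N. idist M (\<sigma> m) (\<sigma> n) < ereal e)
          \<longrightarrow> (\<exists>x\<in>M. \<sigma> \<longlonglongrightarrow> x))"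

text \<open>Geodesic on [a,b]: smooth up to the endpoints (one-sided), with acceleration normal to M.\<close>
definition geodesic_on :: "'a::euclidean_space set \<Rightarrow> (real \<Rightarrow> 'a) \<Rightarrow> real \<Rightarrow> real \<Rightarrow> bool" where
  "geodesic_on M c a b \<longleftrightarrow> a \<le> b \<and> (\<forall>t\<in>{a..b}. c t \<in> M) \<and>
     (\<exists>D::nat \<Rightarrow> real \<Rightarrow> 'a. (\<forall>t\<in>{a..b}. D 0 t = c t) \<and>
        (\<forall>k. continuous_on {a..b} (D k)) \<and>
        (\<forall>k. \<forall>t\<in>{a..b}. (D k has_vector_derivative D (Suc k) t) (at t within {a..b})) \<and>
        (\<forall>t\<in>{a..b}. \<forall>v\<in>tangent_space M (c t). D 2 t \<bullet> v = 0))"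

definition unit_speed_on :: "(real \<Rightarrow> 'a::euclidean_space) \<Rightarrow> real \<Rightarrow> real \<Rightarrow> bool" where
  "unit_speed_on c a b \<longleftrightarrow> (\<forall>t\<in>{a..b}. \<exists>v. (c has_vector_derivative v) (at t within {a..b}) \<and> norm v = 1)"

definition minimizing_geodesic_on :: "'a::euclidean_space set \<Rightarrow> (real \<Rightarrow> 'a) \<Rightarrow> real \<Rightarrow> real \<Rightarrow> bool" where
  "minimizing_geodesic_on M c a b \<longleftrightarrow> geodesic_on M c a b \<and> curve_length c a b = idist M (c a) (c b)"

definition loops :: "'a::euclidean_space set \<Rightarrow> 'a \<Rightarrow> (real \<Rightarrow> 'a) set" where
  "loops M p = {g. path g \<and> path_image g \<subseteq> M \<and> pathstart g = p \<and> pathfinish g = p}"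

definition loop_class :: "'a::euclidean_space set \<Rightarrow> 'a \<Rightarrow> (real \<Rightarrow> 'a) \<Rightarrow> (real \<Rightarrow> 'a) set" where
  "loop_class M p g = {h \<in> loops M p. homotopic_paths M g h}"

definition is_pi1_class :: "'a::euclidean_space set \<Rightarrow> 'a \<Rightarrow> (real \<Rightarrow> 'a) set \<Rightarrow> bool" where
  "is_pi1_class M p C \<longleftrightarrow> (\<exists>g\<in>loops M p. C = loop_class M p g)"

definition pi1_mult :: "'a::euclidean_space set \<Rightarrow> 'a \<Rightarrow> (real \<Rightarrow> 'a) set \<Rightarrow> (real \<Rightarrow> 'a) set \<Rightarrow> (real \<Rightarrow> 'a) set" where
  "pi1_mult M p C1 C2 = {h. \<exists>g1\<in>C1. \<exists>g2\<in>C2. h \<in> loop_class M p (g1 +++ g2)}"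

definition class_length :: "(real \<Rightarrow> 'a::euclidean_space) set \<Rightarrow> ereal" where
  "class_length C = (INF g \<in> C. curve_length g 0 1)"

definition irreducible_class :: "'a::euclidean_space set \<Rightarrow> 'a \<Rightarrow> (real \<Rightarrow> 'a) set \<Rightarrow> bool" where
  "irreducible_class M p C \<longleftrightarrow> is_pi1_class M p C \<and> C \<noteq> loop_class M p (linepath p p) \<and>
     (\<forall>C1 C2. is_pi1_class M p C1 \<and> is_pi1_class M p C2 \<and> C = pi1_mult M p C1 C2 \<longrightarrow>
        class_length C1 \<ge> class_length C \<or> class_length C2 \<ge> class_length C)"

end

theory Submission
  imports Defs
begin

lemma cl_upper:
  assumes "t 0 = a" "t n = b" "\<forall>i<n. t i \<le> t (Suc i)"
  shows "ereal (\<Sum>i<n. dist (g (t (Suc i))) (g (t i))) \<le> curve_length g a b"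
  unfolding curve_length_def
  by (rule SUP_upper2[where i="(n,t)"]) (use assms in auto)

lemma cl_least:
  assumes "\<And>n t. t 0 = a \<Longrightarrow> t n = b \<Longrightarrow> \<forall>i<n. t i \<le> t (Suc i) \<Longrightarrow>
     ereal (\<Sum>i<n. dist (g (t (Suc i))) (g (t i))) \<le> B"
  shows "curve_length g a b \<le> B"
  unfolding curve_length_def
  by (rule SUP_least) (use assms in auto)

lemma chain_mono:
  assumes "\<forall>i<n. t i \<le> t (Suc i)" "i \<le> j" "j \<le> n"
  shows "t i \<le> (t j :: real)"
  using assms(2,3)
proof (induction j)
  case 0 then show ?case by simp
next
  case (Suc j)
  show ?case
  proof (cases "i = Suc j")
    case False
    then have "t i \<le> t j" using Suc by simp
    also have "t j \<le> t (Suc j)" using assms(1) Suc by simp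
    finally show ?thesis .
  qed simp
qed

lemma chain_in:
  assumes "t 0 = a" "t n = b" "\<forall>i<n. t i \<le> t (Suc i)" "i \<le> n"
  shows "t i \<in> {a..(b::real)}"
  using chain_mono[OF assms(3), of 0 i] chain_mono[OF assms(3), of i n] assms by auto

lemma cl_single:
  assumes "a \<le> b"
  shows "ereal (dist (g b) (g a)) \<le> curve_length g a b"
  using cl_upper[of "\<lambda>i. if i = 0 then a else b" a 1 b g] assms by simp

lemma cl_nonneg:
  assumes "a \<le> b" shows "0 \<le> curve_length g a b"
  using cl_single[OF assms, of g] by (meson order_trans zero_le_dist ereal_less_eq(5))

lemma cl_lipschitz:
  assumes "a \<le> b" and lip: "\<And>x y. x \<in> {a..b} \<Longrightarrow> y \<in> {a..b} \<Longrightarrow> dist (g x) (g y) \<le> K * \<bar>x - y\<bar>"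
  shows "curve_length g a b \<le> ereal (K * (b - a))"
proof (rule cl_least)
  fix n t assume t: "t 0 = a" "t n = b" "\<forall>i<n. t i \<le> t (Suc i)"
  have "(\<Sum>i<n. dist (g (t (Suc i))) (g (t i))) \<le> (\<Sum>i<n. K * (t (Suc i) - t i))"
  proof (rule sum_mono)
    fix i assume "i \<in> {..<n}"
    then have "t i \<in> {a..b}" "t (Suc i) \<in> {a..b}" "t i \<le> t (Suc i)"
      using chain_in[OF t, of i] chain_in[OF t, of "Suc i"] t(3) by auto
    then show "dist (g (t (Suc i))) (g (t i)) \<le> K * (t (Suc i) - t i)"
      using lip[of "t (Suc i)" "t i"] by simp
  qed
  also have "\<dots> = K * (b - a)"
    by (simp add: sum_distrib_left[symmetric] sum_lessThan_telescope t)
  finally show "ereal (\<Sum>i<n. dist (g (t (Suc i))) (g (t i))) \<le> ereal (K * (b - a))" by simp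
qed

lemma cl_mono_reparam:
  assumes mono: "\<And>x y. x \<in> {a..b} \<Longrightarrow> y \<in> {a..b} \<Longrightarrow> x \<le> y \<Longrightarrow> \<phi> x \<le> \<phi> y"
    and eq: "\<And>s. s \<in> {a..b} \<Longrightarrow> f s = g (\<phi> s)"
  shows "curve_length f a b \<le> curve_length g (\<phi> a) (\<phi> b)"
proof (rule cl_least)
  fix n t assume t: "t 0 = a" "t n = b" "\<forall>i<n. t i \<le> t (Suc i)"
  have "(\<Sum>i<n. dist (f (t (Suc i))) (f (t i))) = (\<Sum>i<n. dist (g ((\<phi> \<circ> t) (Suc i))) (g ((\<phi> \<circ> t) i)))"
    using chain_in[OF t] by (intro sum.cong) (auto simp: eq)
  also have "ereal \<dots> \<le> curve_length g (\<phi> a) (\<phi> b)"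
    by (rule cl_upper) (use t chain_in[OF t] mono in auto)
  finally show "ereal (\<Sum>i<n. dist (f (t (Suc i))) (f (t i))) \<le> curve_length g (\<phi> a) (\<phi> b)" .
qed

lemma cl_anti_reparam:
  assumes anti: "\<And>x y. x \<in> {a..b} \<Longrightarrow> y \<in> {a..b} \<Longrightarrow> x \<le> y \<Longrightarrow> \<phi> y \<le> \<phi> x"
    and eq: "\<And>s. s \<in> {a..b} \<Longrightarrow> f s = g (\<phi> s)"
  shows "curve_length f a b \<le> curve_length g (\<phi> b) (\<phi> a)"
proof (rule cl_least)
  fix n t assume t: "t 0 = a" "t n = b" "\<forall>i<n. t i \<le> t (Suc i)"
  define u where "u i = \<phi> (t (n - i))" for i
  have "(\<Sum>i<n. dist (f (t (Suc i))) (f (t i))) = (\<Sum>i<n. dist (g (\<phi> (t i))) (g (\<phi> (t (Suc i)))))"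
    using chain_in[OF t] by (intro sum.cong) (auto simp: eq dist_commute)
  also have "\<dots> = (\<Sum>i<n. dist (g (\<phi> (t (n - Suc i)))) (g (\<phi> (t (Suc (n - Suc i))))))"
    by (rule sum.nat_diff_reindex[symmetric])
  also have "\<dots> = (\<Sum>i<n. dist (g (u (Suc i))) (g (u i)))"
    by (intro sum.cong) (auto simp: u_def Suc_diff_Suc)
  also have "ereal \<dots> \<le> curve_length g (\<phi> b) (\<phi> a)"
  proof (rule cl_upper)
    show "u 0 = \<phi> b" "u n = \<phi> a" using t by (auto simp: u_def)
    show "\<forall>i<n. u i \<le> u (Suc i)"
    proof (intro allI impI)
      fix i assume i: "i < n"
      have e: "n - i = Suc (n - Suc i)" using i by simp
      have le: "t (n - Suc i) \<le> t (Suc (n - Suc i))" using t(3) i by simp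
      have i1: "t (n - Suc i) \<in> {a..b}" by (rule chain_in[OF t]) simp
      have i2: "t (Suc (n - Suc i)) \<in> {a..b}" by (rule chain_in[OF t]) (use i in simp)
      have "u i = \<phi> (t (Suc (n - Suc i)))" "u (Suc i) = \<phi> (t (n - Suc i))"
        unfolding u_def using e by simp_all
      then show "u i \<le> u (Suc i)" using anti[OF i1 i2 le] by simp
    qed
  qed
  finally show "ereal (\<Sum>i<n. dist (f (t (Suc i))) (f (t i))) \<le> curve_length g (\<phi> b) (\<phi> a)" .
qed

lemma cl_extend:
  assumes "a \<le> x" "x \<le> y"
  shows "curve_length g a x + ereal (dist (g y) (g x)) \<le> curve_length g a y"
proof -
  let ?P = "{(n, t). t 0 = a \<and> t n = x \<and> (\<forall>i<n. t i \<le> t (Suc i))}"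
  let ?S = "\<lambda>nt. ereal (\<Sum>i<fst nt. dist (g (snd nt (Suc i))) (g (snd nt i)))"
  have ne: "?P \<noteq> {}"
  proof -
    have "(1::nat, \<lambda>i::nat. if i = 0 then a else x) \<in> ?P" using assms by auto
    then show ?thesis by blast
  qed
  have "curve_length g a x + ereal (dist (g y) (g x)) = (SUP nt\<in>?P. ?S nt + ereal (dist (g y) (g x)))"
    unfolding curve_length_def by (rule SUP_ereal_add_left[symmetric]) (use ne in auto)
  also have "\<dots> \<le> curve_length g a y"
  proof (rule SUP_least)
    fix nt assume "nt \<in> ?P"
    then obtain n t where nt: "nt = (n, t)" "t 0 = a" "t n = x" "\<forall>i<n. t i \<le> t (Suc i)" by auto
    define t' where "t' = t(Suc n := y)"
    have "(\<Sum>i<Suc n. dist (g (t' (Suc i))) (g (t' i))) =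
        (\<Sum>i<n. dist (g (t (Suc i))) (g (t i))) + dist (g y) (g x)"
      using nt by (simp add: t'_def)
    moreover have "ereal (\<Sum>i<Suc n. dist (g (t' (Suc i))) (g (t' i))) \<le> curve_length g a y"
      by (rule cl_upper) (use nt assms in \<open>auto simp: t'_def less_Suc_eq\<close>)
    ultimately show "?S nt + ereal (dist (g y) (g x)) \<le> curve_length g a y"
      using nt by simp
  qed
  finally show ?thesis .
qed

lemma cl_subadd_aux:
  "t 0 = a \<Longrightarrow> t n = b \<Longrightarrow> (\<forall>i<n. t i \<le> t (Suc i)) \<Longrightarrow> a \<le> m \<Longrightarrow> m \<le> b \<Longrightarrow>
   ereal (\<Sum>i<n. dist (g (t (Suc i))) (g (t i))) \<le> curve_length g a m + curve_length g m b"
proof (induction n arbitrary: b)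
  case 0
  then have "a = b" "m = a" by auto
  then show ?case using cl_nonneg[of a a g] by (simp add: add_nonneg_nonneg zero_ereal_def[symmetric])
next
  case (Suc n)
  define b' where "b' = t n"
  have ch: "\<forall>i<n. t i \<le> t (Suc i)" using Suc.prems(3) by simp
  have ab': "a \<le> b'" using chain_mono[OF ch, of 0 n] Suc.prems(1) by (simp add: b'_def)
  have b'b: "b' \<le> b" using Suc.prems(2,3) by (auto simp: b'_def)
  have sum: "ereal (\<Sum>i<Suc n. dist (g (t (Suc i))) (g (t i))) =
      ereal (\<Sum>i<n. dist (g (t (Suc i))) (g (t i))) + ereal (dist (g b) (g b'))"
    using Suc.prems(2) by (simp add: b'_def)
  show ?case
  proof (cases "m \<le> b'")
    case True
    have "ereal (\<Sum>i<n. dist (g (t (Suc i))) (g (t i))) \<le> curve_length g a m + curve_length g m b'"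
      using Suc.IH[of b'] Suc.prems True ch by (simp add: b'_def)
    then have "ereal (\<Sum>i<Suc n. dist (g (t (Suc i))) (g (t i))) \<le>
        curve_length g a m + (curve_length g m b' + ereal (dist (g b) (g b')))"
      unfolding sum by (metis add.assoc add_right_mono)
    also have "\<dots> \<le> curve_length g a m + curve_length g m b"
      using cl_extend[OF True b'b, of g] by (rule add_left_mono)
    finally show ?thesis .
  next
    case False
    have S: "ereal (\<Sum>i<n. dist (g (t (Suc i))) (g (t i))) \<le> curve_length g a b'"
      by (rule cl_upper) (use Suc.prems ch in \<open>auto simp: b'_def\<close>)
    have "dist (g b) (g b') \<le> dist (g m) (g b') + dist (g b) (g m)"
      by (metis dist_commute dist_triangle)
    then have "ereal (\<Sum>i<Suc n. dist (g (t (Suc i))) (g (t i))) \<le>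
        (curve_length g a b' + ereal (dist (g m) (g b'))) + ereal (dist (g b) (g m))"
      unfolding sum using S
      by (metis (no_types, lifting) add.assoc add_mono ereal_less_eq(3) plus_ereal.simps(1))
    also have "\<dots> \<le> curve_length g a m + curve_length g m b"
      by (intro add_mono cl_extend cl_single) (use False ab' Suc.prems in auto)
    finally show ?thesis .
  qed
qed

lemma cl_subadd:
  assumes "a \<le> m" "m \<le> b"
  shows "curve_length g a b \<le> curve_length g a m + curve_length g m b"
  by (rule cl_least) (rule cl_subadd_aux; use assms in auto)

lemma cl_join:
  assumes "pathfinish g1 = pathstart g2"
  shows "curve_length (g1 +++ g2) 0 1 \<le> curve_length g1 0 1 + curve_length g2 0 1"
proof -
  have "curve_length (g1 +++ g2) 0 1 \<le> curve_length (g1 +++ g2) 0 (1/2) + curve_length (g1 +++ g2) (1/2) 1"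
    by (rule cl_subadd) auto
  also have "\<dots> \<le> curve_length g1 ((\<lambda>s. 2 * s) 0) ((\<lambda>s. 2 * s) (1/2)) + curve_length g2 ((\<lambda>s. 2 * s - 1) (1/2)) ((\<lambda>s. 2 * s - 1) 1)"
    apply (intro add_mono cl_mono_reparam)
    using assms by (auto simp: joinpaths_def pathfinish_def pathstart_def) (simp add: mult.commute)
  finally show ?thesis by simp
qed

lemma cl_reverse:
  "curve_length (reversepath g) 0 1 \<le> curve_length g 0 1"
  using cl_anti_reparam[of 0 1 "\<lambda>s. 1 - s" "reversepath g" g] by (simp add: reversepath_def)

lemma unit_speed_lip:
  assumes "unit_speed_on c a b" "x \<in> {a..b}" "y \<in> {a..b}"
  shows "dist (c x) (c y) \<le> \<bar>x - y\<bar>"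
proof -
  obtain v where v: "\<And>t. t \<in> {a..b} \<Longrightarrow> (c has_vector_derivative v t) (at t within {a..b}) \<and> norm (v t) = 1"
    using assms(1) unfolding unit_speed_on_def by metis
  have "norm (c x - c y) \<le> 1 * norm (x - y)"
  proof (rule differentiable_bound[of "{a..b}" c "\<lambda>t h. h *\<^sub>R v t"])
    show "convex {a..b}" by simp
    show "(c has_derivative (\<lambda>h. h *\<^sub>R v t)) (at t within {a..b})" if "t \<in> {a..b}" for t
      using v[OF that] by (simp add: has_vector_derivative_def)
    show "onorm (\<lambda>h. h *\<^sub>R v t) \<le> 1" if "t \<in> {a..b}" for t
      using v[OF that] onorm_scaleR_left[OF bounded_linear_ident, of "v t"] onorm_id[where 'a=real] by simp
  qed (use assms in auto)
  then show ?thesis by (simp add: dist_norm)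
qed

lemma geodesic_restrict:
  assumes "geodesic_on M c a b" "a \<le> a'" "a' \<le> b'" "b' \<le> b"
  shows "geodesic_on M c a' b'"
proof -
  have sub: "{a'..b'} \<subseteq> {a..b}" using assms by auto
  obtain D :: "nat \<Rightarrow> real \<Rightarrow> 'a" where D: "\<forall>t\<in>{a..b}. D 0 t = c t"
    "\<forall>k. continuous_on {a..b} (D k)"
    "\<forall>k. \<forall>t\<in>{a..b}. (D k has_vector_derivative D (Suc k) t) (at t within {a..b})"
    "\<forall>t\<in>{a..b}. \<forall>v\<in>tangent_space M (c t). D 2 t \<bullet> v = 0"
    using assms(1) unfolding geodesic_on_def by blast
  show ?thesis unfolding geodesic_on_def
  proof (intro conjI exI[of _ D])
    show "a' \<le> b'" by fact
    show "\<forall>t\<in>{a'..b'}. c t \<in> M" using assms(1) sub unfolding geodesic_on_def by blast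
    show "\<forall>t\<in>{a'..b'}. D 0 t = c t" using D sub by blast
    show "\<forall>k. continuous_on {a'..b'} (D k)" using D(2) sub continuous_on_subset by blast
    show "\<forall>k. \<forall>t\<in>{a'..b'}. (D k has_vector_derivative D (Suc k) t) (at t within {a'..b'})"
      using D(3) sub has_vector_derivative_within_subset by blast
    show "\<forall>t\<in>{a'..b'}. \<forall>v\<in>tangent_space M (c t). D 2 t \<bullet> v = 0" using D(4) sub by blast
  qed
qed

lemma ereal_add_le_less:
  fixes a b :: ereal
  assumes "a \<le> ereal x" "b < ereal y" "0 \<le> a"
  shows "a + b < ereal (x + y)"
  using assms by (cases a; cases b) auto

lemma loop_class_eq:
  assumes "homotopic_paths M g0 g"
  shows "loop_class M p g0 = loop_class M p g"
  using assms unfolding loop_class_def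
  by (auto intro: homotopic_paths_trans homotopic_paths_sym)

theorem proposition1:
  fixes M :: "'a::euclidean_space set" and p :: 'a and C :: "(real \<Rightarrow> 'a) set"
    and c :: "real \<Rightarrow> 'a" and L :: real
  assumes "embedded_submanifold M" and "complete_manifold M" and "p \<in> M"
    and "irreducible_class M p C"
    and "ereal L = class_length C"
    and "c 0 = p" and "c L = p" and "geodesic_on M c 0 L" and "unit_speed_on c 0 L"
    and "(\<lambda>s. c (L * s)) \<in> C"
  shows "minimizing_geodesic_on M c 0 (L / 2) \<and> minimizing_geodesic_on M c (L / 2) L"
proof -
  note geo = assms(8) and us = assms(9) and irr = assms(4)
  have L0: "0 \<le> L" using geo unfolding geodesic_on_def by simp
  have inM: "c t \<in> M" if "t \<in> {0..L}" for t using geo that unfolding geodesic_on_def by blast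
  have cont: "continuous_on {0..L} c"
  proof -
    have "continuous (at t within {0..L}) c" if "t \<in> {0..L}" for t
      using us that unfolding unit_speed_on_def by (meson has_vector_derivative_continuous)
    then show ?thesis by (simp add: continuous_on_eq_continuous_within)
  qed
  have lip: "dist (c x) (c y) \<le> 1 * \<bar>x - y\<bar>" if "x \<in> {0..L}" "y \<in> {0..L}" for x y
    using unit_speed_lip[OF us that] by simp
  define q where "q = c (L/2)"
  define c1 where "c1 = (\<lambda>s. c (L/2 * s))"
  define c2 where "c2 = (\<lambda>s. c (L/2 + L/2 * s))"
  define g where "g = (\<lambda>s. c (L * s))"
  have im1: "L/2 * s \<in> {0..L}" if "s \<in> {0..1}" for s
  proof -
    have "L/2 * s \<le> L/2" using that L0 by (intro mult_left_le) auto
    then show ?thesis using that L0 by auto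
  qed
  have im2: "L/2 + L/2 * s \<in> {0..L}" if "s \<in> {0..1}" for s
  proof -
    have "L/2 * s \<le> L/2" using that L0 by (intro mult_left_le) auto
    then show ?thesis using that L0 by auto
  qed
  have path_c1: "path c1" unfolding path_def c1_def
    by (rule continuous_on_compose2[OF cont]) (use im1 in \<open>auto intro!: continuous_intros\<close>)
  have path_c2: "path c2" unfolding path_def c2_def
    by (rule continuous_on_compose2[OF cont]) (use im2 in \<open>auto intro!: continuous_intros\<close>)
  have pim1: "path_image c1 \<subseteq> M" unfolding path_image_def c1_def using im1 inM by auto
  have pim2: "path_image c2 \<subseteq> M" unfolding path_image_def c2_def using im2 inM by auto
  have ends: "pathstart c1 = p" "pathfinish c1 = q" "pathstart c2 = q" "pathfinish c2 = p"
    using assms(6,7) by (auto simp: pathstart_def pathfinish_def c1_def c2_def q_def)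
  have g_join: "g = c1 +++ c2"
    unfolding g_def c1_def c2_def joinpaths_def fun_eq_iff
  proof (intro allI)
    fix x :: real
    have "L / 2 + L / 2 * (2 * x - 1) = L * x" by (simp add: field_simps)
    then show "c (L * x) = (if x \<le> 1/2 then c (L/2 * (2 * x)) else c (L/2 + L/2 * (2 * x - 1)))"
      by simp
  qed
  have len_c1: "curve_length c1 0 1 \<le> curve_length c 0 (L/2)"
    using cl_mono_reparam[of 0 1 "\<lambda>s. L/2 * s" c1 c] L0 by (simp add: c1_def mult_left_mono)
  have len_c2: "curve_length c2 0 1 \<le> curve_length c (L/2) L"
    using cl_mono_reparam[of 0 1 "\<lambda>s. L/2 + L/2 * s" c2 c] L0 by (simp add: c2_def mult_left_mono)
  have len_h1: "curve_length c 0 (L/2) \<le> ereal (L/2)"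
    using cl_lipschitz[of 0 "L/2" c 1] lip L0 by simp
  have len_h2: "curve_length c (L/2) L \<le> ereal (L/2)"
    using cl_lipschitz[of "L/2" L c 1] lip L0 by simp
  have qM: "q \<in> M" using inM L0 by (simp add: q_def)
  obtain g0 where g0: "g0 \<in> loops M p" "C = loop_class M p g0"
    using irr unfolding irreducible_class_def is_pi1_class_def by blast
  have gC: "g \<in> C" using assms(10) by (simp add: g_def)
  have Cg: "C = loop_class M p g"
    using g0 gC by (metis (no_types, lifting) loop_class_def loop_class_eq mem_Collect_eq)
  have key: "ereal (L/2) \<le> curve_length \<sigma> 0 1"
    if \<sigma>: "path \<sigma>" "path_image \<sigma> \<subseteq> M" "pathstart \<sigma> = p" "pathfinish \<sigma> = q" for \<sigma>
  proof (rule ccontr)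
    assume "\<not> ereal (L/2) \<le> curve_length \<sigma> 0 1"
    then have short: "curve_length \<sigma> 0 1 < ereal (L/2)" by simp
    define h1 where "h1 = c1 +++ reversepath \<sigma>"
    define h2 where "h2 = \<sigma> +++ c2"
    have h1L: "h1 \<in> loops M p" unfolding h1_def loops_def using \<sigma> path_c1 pim1 ends
      by (auto intro!: path_join_imp simp: path_image_join)
    have h2L: "h2 \<in> loops M p" unfolding h2_def loops_def using \<sigma> path_c2 pim2 ends
      by (auto intro!: path_join_imp simp: path_image_join)
    have hom: "homotopic_paths M (h1 +++ h2) g"
    proof -
      have hA: "homotopic_paths M (h1 +++ h2) (c1 +++ (reversepath \<sigma> +++ (\<sigma> +++ c2)))"
        unfolding h1_def h2_def using \<sigma> path_c1 pim1 path_c2 pim2 ends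
        by (intro homotopic_paths_sym[OF homotopic_paths_assoc])
           (auto intro!: path_join_imp simp: path_image_join)
      have "homotopic_paths M (reversepath \<sigma> +++ (\<sigma> +++ c2)) ((reversepath \<sigma> +++ \<sigma>) +++ c2)"
        using \<sigma> path_c2 pim2 ends by (intro homotopic_paths_assoc) auto
      also have "homotopic_paths M ((reversepath \<sigma> +++ \<sigma>) +++ c2) (linepath q q +++ c2)"
      proof -
        have lv: "homotopic_paths M (reversepath \<sigma> +++ \<sigma>) (linepath q q)"
          using homotopic_paths_linv[OF \<sigma>(1,2)] \<sigma>(4) by simp
        show ?thesis using \<sigma> path_c2 pim2 ends by (intro homotopic_paths_join lv) auto
      qed
      also have "homotopic_paths M (linepath q q +++ c2) c2"
        using path_c2 pim2 ends by (intro homotopic_paths_lid') auto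
      finally have "homotopic_paths M (reversepath \<sigma> +++ (\<sigma> +++ c2)) c2" .
      then have "homotopic_paths M (c1 +++ (reversepath \<sigma> +++ (\<sigma> +++ c2))) (c1 +++ c2)"
        using path_c1 pim1 ends \<sigma> by (intro homotopic_paths_join) auto
      then show ?thesis using g_join
        using hA homotopic_paths_trans by auto
    qed
    define C1 where "C1 = loop_class M p h1"
    define C2 where "C2 = loop_class M p h2"
    have h1C: "h1 \<in> C1" using h1L by (simp add: C1_def loop_class_def loops_def)
    have h2C: "h2 \<in> C2" using h2L by (simp add: C2_def loop_class_def loops_def)
    have "C = pi1_mult M p C1 C2"
    proof (intro set_eqI iffI)
      fix h assume "h \<in> C"
      then have "h \<in> loops M p" "homotopic_paths M g h" unfolding Cg loop_class_def by auto
      then have "h \<in> loop_class M p (h1 +++ h2)"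
        unfolding loop_class_def using hom homotopic_paths_trans by blast
      then show "h \<in> pi1_mult M p C1 C2" unfolding pi1_mult_def using h1C h2C by blast
    next
      fix h assume "h \<in> pi1_mult M p C1 C2"
      then obtain k1 k2 where k: "k1 \<in> C1" "k2 \<in> C2" "h \<in> loop_class M p (k1 +++ k2)"
        unfolding pi1_mult_def by blast
      have "homotopic_paths M h1 k1" "homotopic_paths M h2 k2"
        using k unfolding C1_def C2_def loop_class_def by auto
      then have "homotopic_paths M (h1 +++ h2) (k1 +++ k2)"
        using h1L h2L by (intro homotopic_paths_join) (auto simp: loops_def)
      then have "homotopic_paths M g (k1 +++ k2)"
        using hom homotopic_paths_sym homotopic_paths_trans by blast
      then show "h \<in> C" using k(3) unfolding Cg loop_class_def
        using homotopic_paths_trans by blast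
    qed
    moreover have "is_pi1_class M p C1" "is_pi1_class M p C2"
      using h1L h2L by (auto simp: is_pi1_class_def C1_def C2_def)
    ultimately have "class_length C1 \<ge> class_length C \<or> class_length C2 \<ge> class_length C"
      using irr unfolding irreducible_class_def by blast
    moreover have "class_length C1 < ereal L"
    proof -
      have "class_length C1 \<le> curve_length h1 0 1"
        unfolding class_length_def using h1C by (rule INF_lower)
      also have "\<dots> \<le> curve_length c1 0 1 + curve_length (reversepath \<sigma>) 0 1"
        unfolding h1_def using ends \<sigma> by (intro cl_join) auto
      also have "\<dots> < ereal (L/2 + L/2)"
        using len_c1 len_h1 cl_reverse[of \<sigma>] short cl_nonneg[of 0 1 c1]
        by (intro ereal_add_le_less) auto
      finally show ?thesis by simp
    qed
    moreover have "class_length C2 < ereal L"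
    proof -
      have "class_length C2 \<le> curve_length h2 0 1"
        unfolding class_length_def using h2C by (rule INF_lower)
      also have "\<dots> \<le> curve_length \<sigma> 0 1 + curve_length c2 0 1"
        unfolding h2_def using ends \<sigma> by (intro cl_join) auto
      also have "\<dots> = curve_length c2 0 1 + curve_length \<sigma> 0 1" by (rule add.commute)
      also have "\<dots> < ereal (L/2 + L/2)"
        using len_c2 len_h2 short cl_nonneg[of 0 1 c2]
        by (intro ereal_add_le_less) auto
      finally show ?thesis by simp
    qed
    ultimately show False using assms(5) by auto
  qed
  have lo1: "ereal (L/2) \<le> idist M p q"
    unfolding idist_def by (rule INF_greatest) (use key in auto)
  have lo2: "ereal (L/2) \<le> idist M q p"
    unfolding idist_def
  proof (rule INF_greatest)
    fix \<sigma> assume "\<sigma> \<in> {\<gamma>. path \<gamma> \<and> path_image \<gamma> \<subseteq> M \<and> pathstart \<gamma> = q \<and> pathfinish \<gamma> = p}"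
    then have "ereal (L/2) \<le> curve_length (reversepath \<sigma>) 0 1" by (intro key) auto
    then show "ereal (L/2) \<le> curve_length \<sigma> 0 1" using cl_reverse[of \<sigma>] by auto
  qed
  have up1: "idist M p q \<le> curve_length c1 0 1"
    unfolding idist_def by (rule INF_lower) (use path_c1 pim1 ends in auto)
  have up2: "idist M q p \<le> curve_length c2 0 1"
    unfolding idist_def by (rule INF_lower) (use path_c2 pim2 ends in auto)
  have e1: "curve_length c 0 (L/2) = idist M (c 0) (c (L/2))"
    using lo1 up1 len_c1 len_h1 assms(6) q_def by (metis antisym order_trans)
  have e2: "curve_length c (L/2) L = idist M (c (L/2)) (c L)"
    using lo2 up2 len_c2 len_h2 assms(7) q_def by (metis antisym order_trans)
  show ?thesis unfolding minimizing_geodesic_on_def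
    using e1 e2 geodesic_restrict[OF geo] L0 by auto
qed

end
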